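(* Let $\hbar^2\ll\varepsilon_\hbar\ll\hbar$. Let $\Lambda_1\ne\Lambda_2$ in $\mathcal{L}_1$ and let $k(\hbar)=n_1(\hbar)\vec v_{\Lambda_1}+m_1(\hbar)\vec v_{\Lambda_1}^\perp$ and $l(\hbar)=n_2(\hbar)\vec v_{\Lambda_2}+m_2(\hbar)\vec v_{\Lambda_2}^\perp$ be two distinct sequences in $\mathbb{Z}^2$ ($n_j,m_j$ integers) with $\|k(\hbar)\|=\|l(\hbar)\|=\hbar^{-1}$, and suppose that for $j=1,2$ there is $\omega_j\in\mathbb{R}$ with $2\pi m_j(\hbar)\hbar^2\varepsilon_\hbar^{-1}\to\omega_j$. Set $\psi_\hbar=\frac1{\sqrt2}(e_{k(\hbar)}+e_{l(\hbar)})$. Then the limits $\mathbf{F}^0_\Lambda$ of the distributions $a\mapsto\langle\psi_\hbar,\operatorname{Op}_\hbar(\mathcal{I}_\Lambda(a)(x,\hbar H_\Lambda(\xi)/\varepsilon_\hbar))\psi_\hbar\rangle$ on $\mathcal{C}^\infty_c(\mathbb{T}^2\times\mathbb{R})$ are: $\mathbf{F}^0_\Lambda=\frac12\,dx\otimes\delta_{\omega_1L_{\Lambda_1}}(\eta)$ if $\Lambda=\mathbb{Z}\vec v_{\Lambda_1}^\perp$, $\mathbf{F}^0_\Lambda=\frac12\,dx\otimes\delta_{\omega_2L_{\Lambda_2}}(\eta)$ if $\Lambda=\mathbb{Z}\vec v_{\Lambda_2}^\perp$, and $\mathbf{F}^0_\Lambda=0$ otherwise.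
   Context: $\mathbb{T}^2=\mathbb{R}^2/\mathbb{Z}^2$, $e_k(x)=e^{2i\pi k\cdot x}$, $\langle u,v\rangle=\int\overline{u}v$. Standard quantization: $\operatorname{Op}_\hbar(a)e_k=a(x,2\pi\hbar k)e_k$. $\mathcal{L}_1$: primitive rank-one sublattices $\Lambda=\mathbb{Z}\vec v_\Lambda$ of $\mathbb{Z}^2$, with fixed generator $\vec v_\Lambda$, $\vec v_\Lambda^\perp$ its rotation by $+\pi/2$, $L_\Lambda=\|\vec v_\Lambda\|$, $H_\Lambda(\xi)=\langle\xi,\vec v_\Lambda\rangle/L_\Lambda$, $\mathcal{I}_\Lambda(a)(x,\eta)=\frac1{L_\Lambda}\int_0^{L_\Lambda}a(x+t\vec v_\Lambda^\perp/L_\Lambda,\eta)dt$. For $\Lambda=\mathbb{Z}\vec v_{\Lambda_j}^\perp$ the generator is taken to be $\vec v_{\Lambda_j}^\perp$. $dx$ is Lebesgue measure on $\mathbb{T}^2$. *)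

theory Defs
  imports "HOL-Analysis.Analysis"
begin

(* Points of R^2 (and of T^2 via 1-periodic functions) are real \<times> real;
   lattice points of Z^2 are int \<times> int. *)

definition ivec :: "int \<times> int \<Rightarrow> real \<times> real" where
  "ivec k = (real_of_int (fst k), real_of_int (snd k))"

definition inorm :: "int \<times> int \<Rightarrow> real" where
  "inorm k = norm (ivec k)"

definition rot :: "int \<times> int \<Rightarrow> int \<times> int" where
  "rot v = (- snd v, fst v)"

definition lcomb :: "int \<Rightarrow> int \<times> int \<Rightarrow> int \<Rightarrow> int \<times> int \<Rightarrow> int \<times> int" where
  "lcomb n v m w = (n * fst v + m * fst w, n * snd v + m * snd w)"

(* generator of a primitive rank-one sublattice *)
definition primitive :: "int \<times> int \<Rightarrow> bool" where
  "primitive v \<longleftrightarrow> gcd (fst v) (snd v) = 1"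

definition ek :: "int \<times> int \<Rightarrow> real \<times> real \<Rightarrow> complex" where
  "ek k x = cis (2 * pi * (ivec k \<bullet> x))"

definition Llen :: "int \<times> int \<Rightarrow> real" where
  "Llen v = inorm v"

definition Hfun :: "int \<times> int \<Rightarrow> real \<times> real \<Rightarrow> real" where
  "Hfun v \<xi> = (\<xi> \<bullet> ivec v) / Llen v"

definition Iav :: "int \<times> int \<Rightarrow> (real \<times> real \<Rightarrow> real \<Rightarrow> complex) \<Rightarrow> real \<times> real \<Rightarrow> real \<Rightarrow> complex" where
  "Iav v a x \<eta> = (1 / Llen v) *\<^sub>R
     integral {0..Llen v} (\<lambda>t. a (x + (t / Llen v) *\<^sub>R ivec (rot v)) \<eta>)"

definition trig :: "(int \<times> int \<Rightarrow> complex) \<Rightarrow> real \<times> real \<Rightarrow> complex" where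
  "trig c x = (\<Sum>k | c k \<noteq> 0. c k * ek k x)"

(* Op_h(b) applied to a trigonometric polynomial: Op_h(b) e_k = b(x, 2 pi h k) e_k *)
definition Op :: "real \<Rightarrow> (real \<times> real \<Rightarrow> real \<times> real \<Rightarrow> complex) \<Rightarrow> (int \<times> int \<Rightarrow> complex)
                  \<Rightarrow> real \<times> real \<Rightarrow> complex" where
  "Op h b c x = (\<Sum>k | c k \<noteq> 0. c k * b x ((2 * pi * h) *\<^sub>R ivec k) * ek k x)"

definition ip :: "(real \<times> real \<Rightarrow> complex) \<Rightarrow> (real \<times> real \<Rightarrow> complex) \<Rightarrow> complex" where
  "ip u w = integral (cbox (0,0) (1,1)) (\<lambda>x. cnj (u x) * w x)"

definition psi_coeff :: "int \<times> int \<Rightarrow> int \<times> int \<Rightarrow> int \<times> int \<Rightarrow> complex" where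
  "psi_coeff k l j = (if j = k \<or> j = l then complex_of_real (1 / sqrt 2) else 0)"

definition partial_deriv :: "'a::euclidean_space \<Rightarrow> ('a \<Rightarrow> 'b::real_normed_vector) \<Rightarrow> 'a \<Rightarrow> 'b" where
  "partial_deriv u f x = frechet_derivative f (at x) u"

fun Ck :: "nat \<Rightarrow> ('a::euclidean_space \<Rightarrow> 'b::real_normed_vector) \<Rightarrow> bool" where
  "Ck 0 f = continuous_on UNIV f"
| "Ck (Suc n) f = (f differentiable_on UNIV \<and> (\<forall>i\<in>Basis. Ck n (partial_deriv i f)))"

definition smooth :: "('a::euclidean_space \<Rightarrow> 'b::real_normed_vector) \<Rightarrow> bool" where
  "smooth f \<longleftrightarrow> (\<forall>n. Ck n f)"

definition test_fun :: "(real \<times> real \<Rightarrow> real \<Rightarrow> complex) \<Rightarrow> bool" where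
  "test_fun a \<longleftrightarrow> smooth (\<lambda>(x, \<eta>). a x \<eta>)
     \<and> (\<forall>x \<eta> j. a (x + ivec j) \<eta> = a x \<eta>)
     \<and> (\<exists>R. \<forall>x \<eta>. \<bar>\<eta>\<bar> > R \<longrightarrow> a x \<eta> = 0)"

definition dist_val :: "real \<Rightarrow> real \<Rightarrow> int \<times> int \<Rightarrow> int \<times> int \<Rightarrow> int \<times> int
                        \<Rightarrow> (real \<times> real \<Rightarrow> real \<Rightarrow> complex) \<Rightarrow> complex" where
  "dist_val h \<epsilon> k l v a =
     ip (trig (psi_coeff k l))
        (Op h (\<lambda>x \<xi>. Iav v a x (h * Hfun v \<xi> / \<epsilon>)) (psi_coeff k l))"

end

theory Submission
  imports Defs "HOL-Analysis.Kronecker_Approximation_Theorem"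
begin


lemma per_int:
  fixes f :: "real \<Rightarrow> 'a"
  assumes "\<And>t. f (t + 1) = f t"
  shows "f (t + of_int n) = f t"
proof -
  have pos: "f (t + of_nat m) = f t" for m t
    by (induction m) (auto simp: assms add.assoc[symmetric] simp del: of_nat_Suc, metis assms add.commute add.left_commute of_nat_Suc)
  show ?thesis
  proof (cases "n \<ge> 0")
    case True then show ?thesis using pos[of t "nat n"] by simp
  next
    case False
    then have "t = (t + of_int n) + of_nat (nat (- n))" by simp
    then show ?thesis using pos[of "t + of_int n" "nat (-n)"] by simp
  qed
qed

lemma per1:
  fixes f :: "real \<Rightarrow> complex"
  assumes cont: "continuous_on UNIV f" and per: "\<And>t. f (t + 1) = f t"
  shows "integral {0..1} (\<lambda>t. f (t + c)) = integral {0..1} f"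
proof -
  define r where "r = c - of_int \<lfloor>c\<rfloor>"
  have r: "0 \<le> r" "r < 1" unfolding r_def by linarith+
  have fr: "f (t + c) = f (t + r)" for t
    using per_int[of f "t + r" "\<lfloor>c\<rfloor>", OF per] unfolding r_def by (simp add: algebra_simps)
  have int: "f integrable_on {a..b}" for a b
    by (rule integrable_continuous_interval) (use cont continuous_on_subset in blast)
  have "integral {0..1} (\<lambda>t. f (t + c)) = integral {0..1} (\<lambda>t. f (t + r))"
    by (simp add: fr)
  also have "\<dots> = integral {r..1+r} f"
    using integral_shift_real_ivl[where a=r and c=r and b="1+r" and f=f] by simp
  also have "\<dots> = integral {r..1} f + integral {1..1+r} f"
    using Henstock_Kurzweil_Integration.integral_combine[of r 1 "1+r" f] r int by simp
  also have "integral {1..1+r} f = integral {0..r} f"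
  proof -
    have "integral {1..1+r} f = integral {1-1..1+r-1} (\<lambda>x. f (x + 1))"
      using integral_shift_real_ivl[where a=1 and c=1 and b="1+r" and f=f] by simp
    also have "\<dots> = integral {0..r} f" by (simp add: per)
    finally show ?thesis .
  qed
  also have "integral {r..1} f + integral {0..r} f = integral {0..1} f"
    using Henstock_Kurzweil_Integration.integral_combine[of 0 r 1 f] r int by (simp add: add.commute)
  finally show ?thesis .
qed

lemma per2:
  fixes g :: "real \<times> real \<Rightarrow> complex"
  assumes cont: "continuous_on UNIV g"
    and p1: "\<And>x y. g (x + 1, y) = g (x, y)" and p2: "\<And>x y. g (x, y + 1) = g (x, y)"
  shows "integral (cbox (0,0) (1,1)) (\<lambda>x. g (x + c)) = integral (cbox (0,0) (1,1)) g"
proof -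
  obtain c1 c2 where c: "c = (c1, c2)" by force
  have cg: "continuous_on S g" for S using cont continuous_on_subset by blast
  have cgc: "continuous_on S (\<lambda>x. g (x + c))" for S
    by (intro continuous_on_compose2[OF cont]) (auto intro!: continuous_intros)
  define H where "H s = integral {0..1} (\<lambda>y. g (s, y))" for s
  have Hc: "continuous_on UNIV H"
    unfolding H_def using integral_continuous_on_param[of UNIV 0 1 "\<lambda>s y. g (s, y)"] cg
    by (simp add: case_prod_beta)
  have "integral (cbox (0,0) (1,1)) (\<lambda>x. g (x + c))
      = integral {0..1} (\<lambda>x1. integral {0..1} (\<lambda>y. g (x1 + c1, y + c2)))"
    using integral_prod_continuous[OF cgc, of 0 0 1 1] by (simp add: c)
  also have "\<dots> = integral {0..1} (\<lambda>x1. H (x1 + c1))"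
  proof (rule integral_cong)
    fix x1
    show "integral {0..1} (\<lambda>y. g (x1 + c1, y + c2)) = H (x1 + c1)"
      unfolding H_def
      by (rule per1[of "\<lambda>y. g (x1 + c1, y)"])
         (auto intro!: continuous_on_compose2[OF cont] continuous_intros simp: p2)
  qed
  also have "\<dots> = integral {0..1} H"
    by (rule per1[OF Hc]) (simp add: H_def p1)
  also have "\<dots> = integral (cbox (0,0) (1,1)) g"
    using integral_prod_continuous[OF cg, of 0 0 1 1] by (simp add: H_def[abs_def])
  finally show ?thesis .
qed




lemma ivec_inner: "ivec j \<bullet> ivec i = of_int (fst j * fst i + snd j * snd i)"
  by (simp add: ivec_def)

lemma ek_add: "ek j (x + y) = ek j x * ek j y"
  by (simp add: ek_def inner_add_right distrib_left cis_mult)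

lemma ek_ivec: "ek j (ivec i) = 1"
proof -
  have "ek j (ivec i) = cis (2 * pi * of_int (fst j * fst i + snd j * snd i))"
    by (simp add: ek_def ivec_inner)
  also have "\<dots> = 1" by (rule cis_multiple_2pi) simp
  finally show ?thesis .
qed

lemma ek_cont: "continuous_on S (ek j)"
  unfolding ek_def by (intro continuous_intros)

lemma Llen_pos: "v \<noteq> (0,0) \<Longrightarrow> Llen v > 0"
  by (auto simp: Llen_def inorm_def ivec_def prod_eq_iff)




locale tf =
  fixes a :: "real \<times> real \<Rightarrow> real \<Rightarrow> complex"
  assumes ac: "continuous_on UNIV (\<lambda>(x, \<eta>). a x \<eta>)"
    and ap: "\<And>x \<eta> j. a (x + ivec j) \<eta> = a x \<eta>"
begin

lemma ac2: "continuous_on S (\<lambda>p. a (f p) (g p))" if "continuous_on S f" "continuous_on S g"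
  using continuous_on_compose2[OF ac, of S "\<lambda>p. (f p, g p)"] that
  by (auto intro!: continuous_intros)

lemma ap1: "a (x + (1, 0)) \<eta> = a x \<eta>" and ap2: "a (x + (0, 1)) \<eta> = a x \<eta>"
  using ap[where x=x and \<eta>=\<eta> and j="(1,0)"] ap[where x=x and \<eta>=\<eta> and j="(0,1)"] by (simp_all add: ivec_def)

lemma Iav_cont: "continuous_on S (\<lambda>x. Iav v a x \<eta>)"
proof -
  have tdiv: "(\<lambda>t. t / Llen v) = (\<lambda>t. t * inverse (Llen v))" by (simp add: divide_inverse)
  have "continuous_on UNIV (\<lambda>x. integral (cbox 0 (Llen v)) (\<lambda>t. a (x + (t / Llen v) *\<^sub>R ivec (rot v)) \<eta>))"
    by (rule integral_continuous_on_param) (auto intro!: ac2 continuous_intros simp: case_prod_beta divide_inverse)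
  then show ?thesis unfolding Iav_def
    by (auto intro!: continuous_intros intro: continuous_on_subset)
qed

lemma trans_inv:
  fixes G :: "real \<times> real \<Rightarrow> complex"
  assumes "continuous_on UNIV G" "\<And>x. G (x + (1,0)) = G x" "\<And>x. G (x + (0,1)) = G x"
  shows "integral (cbox (0,0) (1,1)) (\<lambda>x. G (x + c)) = integral (cbox (0,0) (1,1)) G"
  using per2[of G c] assms by (metis add_Pair add.right_neutral add.left_neutral)

lemma Iav_int:
  assumes v: "v \<noteq> (0,0)"
  shows "integral (cbox (0,0) (1,1)) (\<lambda>x. Iav v a x \<eta>) = integral (cbox (0,0) (1,1)) (\<lambda>x. a x \<eta>)"
proof -
  define L where "L = Llen v"
  have L: "L > 0" using Llen_pos[OF v] by (simp add: L_def)
  define w where "w = ivec (rot v)"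
  define F where "F x t = a (x + (t / L) *\<^sub>R w) \<eta>" for x t
  have Fc: "continuous_on (cbox ((0,0), 0) ((1,1), L)) (\<lambda>(x, t). F x t)"
    unfolding F_def using L by (auto intro!: ac2 continuous_intros simp: case_prod_beta)
  have "integral (cbox (0,0) (1,1)) (\<lambda>x. Iav v a x \<eta>)
       = (1 / L) *\<^sub>R integral (cbox (0,0) (1,1)) (\<lambda>x. integral (cbox 0 L) (F x))"
    by (simp add: Iav_def L_def w_def F_def[abs_def])
  also have "integral (cbox (0,0) (1,1)) (\<lambda>x. integral (cbox 0 L) (F x))
      = integral (cbox 0 L) (\<lambda>t. integral (cbox (0,0) (1,1)) (\<lambda>x. F x t))"
    by (rule integral_swap_continuous[OF Fc])
  also have "\<dots> = integral (cbox 0 L) (\<lambda>t. integral (cbox (0,0) (1,1)) (\<lambda>x. a x \<eta>))"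
    unfolding F_def
    by (rule integral_cong, rule trans_inv[of "\<lambda>x. a x \<eta>"])
       (auto intro!: ac2 continuous_intros simp: ap1 ap2)
  also have "\<dots> = L *\<^sub>R integral (cbox (0,0) (1,1)) (\<lambda>x. a x \<eta>)"
    using L by simp
  finally show ?thesis using L by simp
qed

end



lemma int_cis_period:
  assumes L: "L > 0" and al: "\<alpha> \<in> \<int>" "\<alpha> \<noteq> 0"
  shows "integral {0..L} (\<lambda>t. cis (2 * pi * (- (t / L) * \<alpha>))) = 0"
proof -
  define \<beta> where "\<beta> = \<i> * complex_of_real (- 2 * pi * \<alpha> / L)"
  have b0: "\<beta> \<noteq> 0" using L al by (simp add: \<beta>_def)
  have eq: "cis (2 * pi * (- (t / L) * \<alpha>)) = exp (\<beta> * complex_of_real t)" for t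
    by (simp add: cis_conv_exp \<beta>_def algebra_simps)
  have "exp (\<beta> * complex_of_real L) = cis (2 * pi * (- \<alpha>))"
    using L by (simp add: cis_conv_exp \<beta>_def algebra_simps)
  also have "\<dots> = 1"
  proof -
    obtain n where "\<alpha> = of_int n" using al by (auto elim: Ints_cases)
    then have "2 * pi * (- \<alpha>) = 2 * pi * of_int (- n)" by simp
    then show ?thesis by (metis cis_multiple_2pi Ints_of_int)
  qed
  finally have e1: "exp (\<beta> * complex_of_real L) = 1" .
  show ?thesis
    unfolding eq using Kronecker_Approximation_Theorem.integral_exp[of L \<beta>] L b0 e1 by simp
qed

context tf begin

lemma Iav_orth:
  assumes v: "v \<noteq> (0,0)" and j: "ivec j \<bullet> ivec (rot v) \<noteq> 0"
  shows "integral (cbox (0,0) (1,1)) (\<lambda>x. ek j x * Iav v a x \<eta>) = 0"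
proof -
  define L where "L = Llen v"
  have L: "L > 0" using Llen_pos[OF v] by (simp add: L_def)
  define w where "w = ivec (rot v)"
  define F where "F x t = ek j x * a (x + (t / L) *\<^sub>R w) \<eta>" for x t
  define G where "G y = ek j y * a y \<eta>" for y
  have Gc: "continuous_on UNIV G" unfolding G_def
    by (auto intro!: ac2 continuous_intros ek_cont)
  have Gp: "G (x + ivec i) = G x" for x i
    unfolding G_def by (simp add: ek_add ek_ivec ap)
  have Fc: "continuous_on (cbox ((0,0), 0) ((1,1), L)) (\<lambda>(x, t). F x t)"
    unfolding F_def using L by (auto intro!: ac2 continuous_intros ek_cont[THEN continuous_on_compose2] simp: case_prod_beta)
  have "integral (cbox (0,0) (1,1)) (\<lambda>x. ek j x * Iav v a x \<eta>)
       = of_real (1 / L) * integral (cbox (0,0) (1,1)) (\<lambda>x. integral (cbox 0 L) (F x))"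
    by (simp add: Iav_def L_def w_def F_def[abs_def] scaleR_conv_of_real algebra_simps)
  also have "integral (cbox (0,0) (1,1)) (\<lambda>x. integral (cbox 0 L) (F x))
      = integral (cbox 0 L) (\<lambda>t. integral (cbox (0,0) (1,1)) (\<lambda>x. F x t))"
    by (rule integral_swap_continuous[OF Fc])
  also have "\<dots> = integral (cbox 0 L) (\<lambda>t. ek j (- ((t / L) *\<^sub>R w)) * integral (cbox (0,0) (1,1)) G)"
  proof (rule integral_cong)
    fix t
    have "F x t = ek j (- ((t / L) *\<^sub>R w)) * G (x + (t / L) *\<^sub>R w)" for x
    proof -
      have "ek j x = ek j (x + (t / L) *\<^sub>R w) * ek j (- ((t / L) *\<^sub>R w))"
        using ek_add[of j "x + (t / L) *\<^sub>R w" "- ((t / L) *\<^sub>R w)"] by simp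
      then show ?thesis by (simp add: F_def G_def)
    qed
    then have "integral (cbox (0,0) (1,1)) (\<lambda>x. F x t)
        = ek j (- ((t / L) *\<^sub>R w)) * integral (cbox (0,0) (1,1)) (\<lambda>x. G (x + (t / L) *\<^sub>R w))"
      by simp
    also have "integral (cbox (0,0) (1,1)) (\<lambda>x. G (x + (t / L) *\<^sub>R w)) = integral (cbox (0,0) (1,1)) G"
      by (rule trans_inv[OF Gc]) (use Gp[of _ "(1,0)"] Gp[of _ "(0,1)"] in \<open>simp_all add: ivec_def\<close>)
    finally show "integral (cbox (0,0) (1,1)) (\<lambda>x. F x t)
        = ek j (- ((t / L) *\<^sub>R w)) * integral (cbox (0,0) (1,1)) G" .
  qed
  also have "\<dots> = integral {0..L} (\<lambda>t. cis (2 * pi * (- (t / L) * (ivec j \<bullet> w)))) * integral (cbox (0,0) (1,1)) G"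
    by (simp add: ek_def inner_minus_right)
  also have "integral {0..L} (\<lambda>t. cis (2 * pi * (- (t / L) * (ivec j \<bullet> w)))) = 0"
    by (rule int_cis_period[OF L]) (use j in \<open>simp_all add: w_def ivec_inner\<close>)
  finally show ?thesis by simp
qed

end



definition eta :: "real \<Rightarrow> real \<Rightarrow> int \<times> int \<Rightarrow> int \<times> int \<Rightarrow> real" where
  "eta h \<epsilon> v k = h * Hfun v ((2 * pi * h) *\<^sub>R ivec k) / \<epsilon>"

lemma ek_cnj: "cnj (ek k x) * ek l x = ek (l - k) x"
  by (cases x) (simp add: ek_def ivec_def cis_cnj cis_mult algebra_simps)

lemma psi_set: "{j. psi_coeff k l j \<noteq> 0} = {k, l}"
  by (auto simp: psi_coeff_def)

lemma sum2: "k \<noteq> l \<Longrightarrow> sum F {k, l} = F k + F l" by simp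

lemma dist_val_formula:
  assumes kl: "k \<noteq> l"
  shows "dist_val h \<epsilon> k l v a = integral (cbox (0,0) (1,1)) (\<lambda>x. (1/2) *
     (Iav v a x (eta h \<epsilon> v k) * (1 + ek (k - l) x) + Iav v a x (eta h \<epsilon> v l) * (1 + ek (l - k) x)))"
proof -
  define c where "c = complex_of_real (1 / sqrt 2)"
  have cc: "cnj c * c = 1/2"
    by (simp add: c_def flip: of_real_mult)
  have pc: "psi_coeff k l k = c" "psi_coeff k l l = c" by (simp_all add: psi_coeff_def c_def)
  have e0: "cnj (ek k x) * ek k x = 1" for k x using ek_cnj[of k x k] by (simp add: ek_def ivec_def zero_prod_def[symmetric])
  show ?thesis
    unfolding dist_val_def ip_def trig_def Op_def psi_set eta_def
  proof (rule integral_cong)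
    fix x
    let ?A = "Iav v a x (h * Hfun v ((2 * pi * h) *\<^sub>R ivec k) / \<epsilon>)"
    let ?B = "Iav v a x (h * Hfun v ((2 * pi * h) *\<^sub>R ivec l) / \<epsilon>)"
    have "cnj (\<Sum>j\<in>{k, l}. psi_coeff k l j * ek j x) *
        (\<Sum>j\<in>{k, l}. psi_coeff k l j * Iav v a x (h * Hfun v ((2 * pi * h) *\<^sub>R ivec j) / \<epsilon>) * ek j x)
      = (cnj c * c) * (?A * (cnj (ek k x) * ek k x) + ?B * (cnj (ek k x) * ek l x)
          + ?A * (cnj (ek l x) * ek k x) + ?B * (cnj (ek l x) * ek l x))"
      unfolding sum2[OF kl] pc complex_cnj_add complex_cnj_mult by algebra
    also have "\<dots> = (1/2) * (?A * (1 + ek (k - l) x) + ?B * (1 + ek (l - k) x))"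
      unfolding cc e0 ek_cnj by algebra
    finally show "cnj (\<Sum>j\<in>{k, l}. psi_coeff k l j * ek j x) *
        (\<Sum>j\<in>{k, l}. psi_coeff k l j * Iav v a x (h * Hfun v ((2 * pi * h) *\<^sub>R ivec j) / \<epsilon>) * ek j x)
      = (1/2) * (?A * (1 + ek (k - l) x) + ?B * (1 + ek (l - k) x))" .
  qed
qed




context tf begin

lemma Iav_zero: "(\<And>x. a x \<eta> = 0) \<Longrightarrow> Iav v a x \<eta> = 0"
  by (simp add: Iav_def)

lemma case_zero:
  assumes "\<And>x. a x (eta h \<epsilon> v k) = 0" "\<And>x. a x (eta h \<epsilon> v l) = 0" "k \<noteq> l"
  shows "dist_val h \<epsilon> k l v a = 0"
  using assms by (simp add: dist_val_formula Iav_zero)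

lemma case_one:
  assumes v: "v \<noteq> (0,0)" and kl: "k \<noteq> l" and z: "\<And>x. a x (eta h \<epsilon> v l) = 0"
    and orth: "ivec (k - l) \<bullet> ivec (rot v) \<noteq> 0"
  shows "dist_val h \<epsilon> k l v a = (1/2) * integral (cbox (0,0) (1,1)) (\<lambda>x. a x (eta h \<epsilon> v k))"
proof -
  let ?A = "\<lambda>x. Iav v a x (eta h \<epsilon> v k)"
  have i1: "?A integrable_on cbox (0,0) (1,1)"
    by (rule integrable_continuous[OF Iav_cont])
  have i2: "(\<lambda>x. ek (k - l) x * ?A x) integrable_on cbox (0,0) (1,1)"
    by (rule integrable_continuous) (intro continuous_intros ek_cont Iav_cont)
  have "dist_val h \<epsilon> k l v a = integral (cbox (0,0) (1,1)) (\<lambda>x. (1/2) * (?A x + ek (k - l) x * ?A x))"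
    using kl by (simp add: dist_val_formula Iav_zero z algebra_simps)
  also have "\<dots> = (1/2) * (integral (cbox (0,0) (1,1)) ?A + integral (cbox (0,0) (1,1)) (\<lambda>x. ek (k - l) x * ?A x))"
    using integral_add[OF i1 i2] by simp
  also have "\<dots> = (1/2) * integral (cbox (0,0) (1,1)) (\<lambda>x. a x (eta h \<epsilon> v k))"
    using Iav_int[OF v] Iav_orth[OF v orth] by simp
  finally show ?thesis .
qed

lemma int_cont: "continuous_on UNIV (\<lambda>\<eta>. integral (cbox (0,0) (1,1)) (\<lambda>x. a x \<eta>))"
  by (rule integral_continuous_on_param) (auto intro!: ac2 continuous_intros simp: case_prod_beta)

end



lemma nonpar:
  assumes v: "primitive v" and u: "primitive u" and n1: "u \<noteq> rot v" and n2: "u \<noteq> - rot v"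
  shows "fst u * fst v + snd u * snd v \<noteq> 0"
proof
  obtain a b where vab: "v = (a, b)" by force
  obtain x y where uxy: "u = (x, y)" by force
  assume "fst u * fst v + snd u * snd v = 0"
  then have e: "x * a = - (y * b)" by (simp add: vab uxy)
  have cab: "coprime a b" and cxy: "coprime x y"
    using v u by (simp_all add: primitive_def vab uxy coprime_iff_gcd_eq_1)
  have "a dvd y * b" using e by (metis dvd_minus_iff dvd_triv_right)
  then have ay: "a dvd y" using cab by (simp add: coprime_dvd_mult_left_iff)
  have "b dvd x * a" using e by (metis dvd_minus_iff dvd_triv_right mult.commute)
  then have bx: "b dvd x" using cab coprime_commute by (metis coprime_dvd_mult_left_iff)
  have "y dvd x * a" using e by (metis dvd_minus_iff dvd_triv_left)
  then have ya: "y dvd a" using cxy coprime_commute by (metis coprime_dvd_mult_right_iff)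
  have "x dvd y * b" using e by (metis dvd_minus_iff dvd_triv_left mult.commute)
  then have xb: "x dvd b" using cxy by (metis coprime_dvd_mult_right_iff coprime_commute mult.commute)
  have A: "\<bar>a\<bar> = \<bar>y\<bar>" by (rule zdvd_antisym_abs[OF ay ya])
  have B: "\<bar>b\<bar> = \<bar>x\<bar>" by (rule zdvd_antisym_abs[OF bx xb])
  have nz: "a \<noteq> 0 \<or> b \<noteq> 0" using v by (auto simp: primitive_def vab)
  have "(x = - b \<and> y = a) \<or> (x = b \<and> y = - a)"
    using A B e nz by (smt (verit, ccfv_threshold) mult_minus_left mult.commute mult_cancel_left abs_if)
  then show False using n1 n2 by (auto simp: rot_def vab uxy)
qed




locale lseq =
  fixes h \<epsilon> :: "nat \<Rightarrow> real" and v :: "int \<times> int" and n1 m1 :: "nat \<Rightarrow> int"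
    and k :: "nat \<Rightarrow> int \<times> int" and \<omega> :: real
  assumes h_pos: "\<And>n. h n > 0" and eps_pos: "\<And>n. \<epsilon> n > 0"
    and scale2: "(\<lambda>n. \<epsilon> n / h n) \<longlonglongrightarrow> 0"
    and v: "primitive v"
    and k_def: "\<And>n. k n = lcomb (n1 n) v (m1 n) (rot v)"
    and k_norm: "\<And>n. inorm (k n) = 1 / h n"
    and om: "(\<lambda>n. 2 * pi * real_of_int (m1 n) * (h n)\<^sup>2 / \<epsilon> n) \<longlonglongrightarrow> \<omega>"
begin

definition "NN = real_of_int ((fst v)\<^sup>2 + (snd v)\<^sup>2)"
definition "X n = h n * real_of_int (n1 n)"
definition "Y n = h n * real_of_int (m1 n)"

lemma v0: "v \<noteq> (0,0)" using v by (auto simp: primitive_def)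

lemma NN_ge1: "NN \<ge> 1"
proof -
  have "(fst v)\<^sup>2 + (snd v)\<^sup>2 \<noteq> 0" using v0 by (auto simp: prod_eq_iff)
  moreover have "(fst v)\<^sup>2 + (snd v)\<^sup>2 \<ge> 0" by simp
  ultimately have "(fst v)\<^sup>2 + (snd v)\<^sup>2 \<ge> (1::int)" by linarith
  then show ?thesis unfolding NN_def by linarith
qed

lemma Llen_v: "Llen v = sqrt NN"
  by (simp add: Llen_def inorm_def ivec_def norm_Pair NN_def power2_eq_square)

lemma Llen_rot: "Llen (rot w) = Llen w"
  by (simp add: Llen_def inorm_def ivec_def norm_Pair rot_def power2_eq_square)

lemma Y_lim: "Y \<longlonglongrightarrow> 0"
proof -
  have "(\<lambda>n. (2 * pi * real_of_int (m1 n) * (h n)\<^sup>2 / \<epsilon> n) * (\<epsilon> n / h n) / (2 * pi)) \<longlonglongrightarrow> \<omega> * 0 / (2 * pi)"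
    by (intro tendsto_intros om scale2) simp
  moreover have "(2 * pi * real_of_int (m1 n) * (h n)\<^sup>2 / \<epsilon> n) * (\<epsilon> n / h n) / (2 * pi) = Y n" for n
    using h_pos[of n] eps_pos[of n] by (simp add: Y_def field_simps power2_eq_square)
  ultimately show ?thesis by simp
qed

lemma norm_eq: "(X n)\<^sup>2 * NN + (Y n)\<^sup>2 * NN = 1"
proof -
  have "sqrt ((real_of_int (fst (k n)))\<^sup>2 + (real_of_int (snd (k n)))\<^sup>2) = 1 / h n"
    using k_norm[of n] by (simp add: inorm_def ivec_def norm_Pair)
  then have "(real_of_int (fst (k n)))\<^sup>2 + (real_of_int (snd (k n)))\<^sup>2 = (1 / h n)\<^sup>2"
    by (metis real_sqrt_pow2 add_nonneg_nonneg zero_le_power2)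
  then have "(h n)\<^sup>2 * ((real_of_int (fst (k n)))\<^sup>2 + (real_of_int (snd (k n)))\<^sup>2) = 1"
    using h_pos[of n] by (simp add: field_simps power2_eq_square)
  then show ?thesis
    by (simp add: k_def lcomb_def rot_def X_def Y_def NN_def power2_eq_square algebra_simps)
qed

lemma X_bound: "\<bar>X n\<bar> \<le> 1"
proof -
  have "(X n)\<^sup>2 * NN \<le> 1" using norm_eq[of n] by (smt (verit) NN_ge1 zero_le_power2 mult_nonneg_nonneg)
  then have "(X n)\<^sup>2 \<le> 1" using NN_ge1 by (smt (verit) mult_le_cancel_left1 zero_le_power2 mult.commute)
  then show ?thesis using abs_square_le_1 by blast
qed

lemma X2_lim: "(\<lambda>n. (X n)\<^sup>2) \<longlonglongrightarrow> 1 / NN"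
proof -
  have "(\<lambda>n. 1 / NN - (Y n)\<^sup>2) \<longlonglongrightarrow> 1 / NN - 0\<^sup>2"
    by (intro tendsto_intros Y_lim)
  moreover have "1 / NN - (Y n)\<^sup>2 = (X n)\<^sup>2" for n
    using norm_eq[of n] NN_ge1 by (simp add: field_simps)
  ultimately show ?thesis by simp
qed

lemma XY_lim: "(\<lambda>n. X n * Y n) \<longlonglongrightarrow> 0"
proof (rule Lim_null_comparison)
  show "\<forall>\<^sub>F n in sequentially. norm (X n * Y n) \<le> \<bar>Y n\<bar>"
    using X_bound by (intro always_eventually allI) (simp add: abs_mult mult_left_le_one_le)
  show "(\<lambda>n. \<bar>Y n\<bar>) \<longlonglongrightarrow> 0" using tendsto_rabs[OF Y_lim] by simp
qed

lemma eta_rot: "eta (h n) (\<epsilon> n) (rot v) (k n) = 2 * pi * real_of_int (m1 n) * (h n)\<^sup>2 / \<epsilon> n * Llen v"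
proof -
  have ip: "ivec (k n) \<bullet> ivec (rot v) = real_of_int (m1 n) * NN"
    by (simp add: k_def lcomb_def rot_def ivec_def NN_def power2_eq_square algebra_simps)
  have sq: "NN / sqrt NN = sqrt NN" using NN_ge1 by (simp add: real_div_sqrt)
  have "eta (h n) (\<epsilon> n) (rot v) (k n) = h n * (2 * pi * h n * real_of_int (m1 n) * (NN / sqrt NN)) / \<epsilon> n"
    by (simp add: eta_def Hfun_def Llen_rot Llen_v ip)
  then show ?thesis unfolding sq by (simp add: power2_eq_square Llen_v)
qed

lemma eta_rot_lim: "(\<lambda>n. eta (h n) (\<epsilon> n) (rot v) (k n)) \<longlonglongrightarrow> \<omega> * Llen v"
  unfolding eta_rot by (intro tendsto_intros om)

lemma eta_big:
  assumes u: "primitive u" "u \<noteq> rot v" "u \<noteq> - rot v"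
  shows "\<forall>\<^sub>F n in sequentially. R < \<bar>eta (h n) (\<epsilon> n) u (k n)\<bar>"
proof -
  define c where "c = real_of_int (fst u * fst v + snd u * snd v)"
  define d where "d = real_of_int (- snd v * fst u + fst v * snd u)"
  have c0: "c \<noteq> 0" using nonpar[OF v u(1) u(2) u(3)] unfolding c_def by (metis of_int_eq_0_iff)
  have u0: "u \<noteq> (0,0)" using u by (auto simp: primitive_def)
  define Lu where "Lu = Llen u"
  have Lu: "Lu > 0" using Llen_pos[OF u0] by (simp add: Lu_def)
  define D where "D n = X n * c + Y n * d" for n
  have ipk: "h n * (ivec (k n) \<bullet> ivec u) = D n" for n
    by (simp add: k_def lcomb_def rot_def ivec_def D_def X_def Y_def c_def d_def algebra_simps)
  have eta_eq: "\<bar>eta (h n) (\<epsilon> n) u (k n)\<bar> = (2 * pi / Lu * \<bar>D n\<bar>) * inverse (\<epsilon> n / h n)" for n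
  proof -
    have "eta (h n) (\<epsilon> n) u (k n) = 2 * pi / Lu * D n * (h n / \<epsilon> n)"
      unfolding eta_def Hfun_def Lu_def[symmetric] ipk[symmetric]
      using h_pos[of n] eps_pos[of n] Lu by (simp add: field_simps)
    then show ?thesis using h_pos[of n] eps_pos[of n] Lu by (simp add: abs_mult)
  qed
  have D2: "(\<lambda>n. (D n)\<^sup>2) \<longlonglongrightarrow> (1 / NN) * c\<^sup>2 + 2 * 0 * c * d + 0\<^sup>2 * d\<^sup>2"
  proof -
    have "(D n)\<^sup>2 = (X n)\<^sup>2 * c\<^sup>2 + 2 * (X n * Y n) * c * d + (Y n)\<^sup>2 * d\<^sup>2" for n
      by (simp add: D_def power2_eq_square algebra_simps)
    then show ?thesis by (simp only:) (intro tendsto_intros X2_lim XY_lim Y_lim)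
  qed
  then have "(\<lambda>n. (D n)\<^sup>2) \<longlonglongrightarrow> c\<^sup>2 / NN" by simp
  then have "(\<lambda>n. sqrt ((D n)\<^sup>2)) \<longlonglongrightarrow> sqrt (c\<^sup>2 / NN)" by (rule tendsto_real_sqrt)
  then have "(\<lambda>n. \<bar>D n\<bar>) \<longlonglongrightarrow> sqrt (c\<^sup>2 / NN)" by simp
  then have "(\<lambda>n. 2 * pi / Lu * \<bar>D n\<bar>) \<longlonglongrightarrow> 2 * pi / Lu * sqrt (c\<^sup>2 / NN)" by (intro tendsto_intros)
  moreover have "2 * pi / Lu * sqrt (c\<^sup>2 / NN) > 0" using Lu c0 NN_ge1 by simp
  moreover have "filterlim (\<lambda>n. inverse (\<epsilon> n / h n)) at_top sequentially"
    by (rule filterlim_inverse_at_top[OF scale2]) (use h_pos eps_pos in simp)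
  ultimately have "filterlim (\<lambda>n. (2 * pi / Lu * \<bar>D n\<bar>) * inverse (\<epsilon> n / h n)) at_top sequentially"
    by (rule filterlim_tendsto_pos_mult_at_top)
  then show ?thesis unfolding eta_eq filterlim_at_top_dense by blast
qed

end



lemma int_ident:
  fixes a b c d p q n1 m1 m2 :: int
  assumes N: "a\<^sup>2 + b\<^sup>2 \<noteq> 0"
    and h1: "p * a + q * b = n1 * (a\<^sup>2 + b\<^sup>2)"
    and h2: "p\<^sup>2 + q\<^sup>2 = (n1\<^sup>2 + m1\<^sup>2) * (a\<^sup>2 + b\<^sup>2)"
    and h3: "- p * d + q * c = m2 * (c\<^sup>2 + d\<^sup>2)"
  shows "(m2 * (c\<^sup>2 + d\<^sup>2) - n1 * (- a * d + b * c))\<^sup>2 = m1\<^sup>2 * (a * c + b * d)\<^sup>2"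
proof -
  define N1 where "N1 = a\<^sup>2 + b\<^sup>2"
  define s where "s = q * a - p * b"
  define E where "E = m2 * (c\<^sup>2 + d\<^sup>2) - n1 * (- a * d + b * c)"
  have "s\<^sup>2 = (p\<^sup>2 + q\<^sup>2) * N1 - (p * a + q * b)\<^sup>2"
    unfolding s_def N1_def by algebra
  also have "\<dots> = m1\<^sup>2 * N1\<^sup>2" unfolding h1 h2 N1_def by algebra
  finally have s2: "s\<^sup>2 = m1\<^sup>2 * N1\<^sup>2" .
  have e1: "N1 * (- p * d + q * c) = (p * a + q * b) * (- a * d + b * c) + s * (a * c + b * d)"
    unfolding s_def N1_def by algebra
  have e2: "N1 * E = s * (a * c + b * d)"
    using e1 unfolding h3 h1 N1_def[symmetric] E_def by algebra
  have "N1\<^sup>2 * E\<^sup>2 = N1\<^sup>2 * (m1\<^sup>2 * (a * c + b * d)\<^sup>2)"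
  proof -
    have "N1\<^sup>2 * E\<^sup>2 = (N1 * E)\<^sup>2" by algebra
    also have "\<dots> = s\<^sup>2 * (a * c + b * d)\<^sup>2" unfolding e2 by algebra
    also have "\<dots> = N1\<^sup>2 * (m1\<^sup>2 * (a * c + b * d)\<^sup>2)" unfolding s2 by algebra
    finally show ?thesis .
  qed
  moreover have "N1\<^sup>2 \<noteq> 0" using N unfolding N1_def by simp
  ultimately have "E\<^sup>2 = m1\<^sup>2 * (a * c + b * d)\<^sup>2" by simp
  then show ?thesis unfolding E_def .
qed

lemma inorm_eq: "inorm j = sqrt (real_of_int ((fst j)\<^sup>2 + (snd j)\<^sup>2))"
  by (simp add: inorm_def ivec_def norm_Pair)

lemma rot_prim: "primitive v \<Longrightarrow> primitive (rot v)"
  by (simp add: primitive_def rot_def gcd.commute)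

lemma rot_rot: "rot (rot v) = - v" by (cases v) (simp add: rot_def)

lemma cross:
  assumes L1: "lseq h \<epsilon> v1 n1 m1 k \<omega>1" and L2: "lseq h \<epsilon> v2 n2 m2 l \<omega>2"
    and ne: "v2 \<noteq> v1" "v2 \<noteq> - v1"
  shows "\<forall>\<^sub>F n in sequentially. ivec (k n - l n) \<bullet> ivec (rot (rot v1)) \<noteq> 0"
proof -
  interpret A: lseq h \<epsilon> v1 n1 m1 k \<omega>1 by (rule L1)
  interpret B: lseq h \<epsilon> v2 n2 m2 l \<omega>2 by (rule L2)
  obtain a b where v1: "v1 = (a, b)" by force
  obtain c d where v2: "v2 = (c, d)" by force
  define c12 where "c12 = - a * d + b * c"
  define d12 where "d12 = a * c + b * d"
  have "fst v1 * fst (rot v2) + snd v1 * snd (rot v2) \<noteq> 0"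
    by (rule nonpar[OF rot_prim[OF B.v] A.v]) (use ne in \<open>auto simp: rot_rot\<close>)
  then have c12: "c12 \<noteq> 0" by (simp add: c12_def v1 v2 rot_def algebra_simps)
  then have "1 \<le> \<bar>c12\<bar>" by linarith
  then have "\<bar>1\<bar> \<le> \<bar>real_of_int c12\<bar>" by simp
  then have c12r: "(real_of_int c12)\<^sup>2 \<ge> 1" unfolding abs_le_square_iff by simp
  have NN1: "A.NN \<ge> 1" by (rule A.NN_ge1)
  have ev1: "\<forall>\<^sub>F n in sequentially. (A.X n)\<^sup>2 > 1 / (2 * A.NN)"
  proof -
    have "1 / (2 * A.NN) < 1 / A.NN" using NN1 by (simp add: field_simps)
    from order_tendstoD(1)[OF A.X2_lim this] show ?thesis .
  qed
  have "(\<lambda>n. 2 * (B.Y n * B.NN)\<^sup>2 + 2 * (A.Y n * d12)\<^sup>2) \<longlonglongrightarrow> 2 * (0 * B.NN)\<^sup>2 + 2 * (0 * real_of_int d12)\<^sup>2"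
    by (intro tendsto_intros A.Y_lim B.Y_lim)
  then have ev2: "\<forall>\<^sub>F n in sequentially. 2 * (B.Y n * B.NN)\<^sup>2 + 2 * (A.Y n * d12)\<^sup>2 < 1 / (2 * A.NN)"
    using order_tendstoD(2)[of _ 0 sequentially "1 / (2 * A.NN)"] NN1 by simp
  show ?thesis
  proof (rule eventually_mono[OF eventually_conj[OF ev1 ev2]], rule notI)
    fix n
    assume H: "1 / (2 * A.NN) < (A.X n)\<^sup>2 \<and> 2 * (B.Y n * B.NN)\<^sup>2 + 2 * (A.Y n * d12)\<^sup>2 < 1 / (2 * A.NN)"
      and Z: "ivec (k n - l n) \<bullet> ivec (rot (rot v1)) = 0"
    obtain p q where lpq: "l n = (p, q)" by force
    have "real_of_int (fst (k n - l n) * (- a) + snd (k n - l n) * (- b)) = 0"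
      using Z by (simp add: ivec_def rot_rot v1)
    then have "fst (k n - l n) * (- a) + snd (k n - l n) * (- b) = 0"
      by (simp only: of_int_eq_0_iff)
    then have "(n1 n * a + m1 n * (- b) - p) * (- a) + (n1 n * b + m1 n * a - q) * (- b) = 0"
      by (simp add: A.k_def lcomb_def rot_def v1 lpq)
    then have h1: "p * a + q * b = n1 n * (a\<^sup>2 + b\<^sup>2)" by algebra
    have "inorm (l n) = inorm (k n)" using A.k_norm B.k_norm by simp
    then have "sqrt (real_of_int (p\<^sup>2 + q\<^sup>2)) = sqrt (real_of_int ((fst (k n))\<^sup>2 + (snd (k n))\<^sup>2))"
      unfolding inorm_eq lpq by simp
    then have "p\<^sup>2 + q\<^sup>2 = (fst (k n))\<^sup>2 + (snd (k n))\<^sup>2"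
      unfolding real_sqrt_eq_iff of_int_eq_iff .
    then have "p\<^sup>2 + q\<^sup>2 = (n1 n * a + m1 n * (- b))\<^sup>2 + (n1 n * b + m1 n * a)\<^sup>2"
      by (simp add: A.k_def lcomb_def rot_def v1)
    then have h2: "p\<^sup>2 + q\<^sup>2 = ((n1 n)\<^sup>2 + (m1 n)\<^sup>2) * (a\<^sup>2 + b\<^sup>2)" by algebra
    have "(p, q) = (n2 n * c + m2 n * (- d), n2 n * d + m2 n * c)"
      using B.k_def[of n] by (simp add: lpq lcomb_def rot_def v2)
    then have pq: "p = n2 n * c + m2 n * (- d)" "q = n2 n * d + m2 n * c" by simp_all
    have h3: "- p * d + q * c = m2 n * (c\<^sup>2 + d\<^sup>2)" unfolding pq by algebra
    have N0: "a\<^sup>2 + b\<^sup>2 \<noteq> 0" using A.v0 by (simp add: v1)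
    have I: "(m2 n * (c\<^sup>2 + d\<^sup>2) - n1 n * c12)\<^sup>2 = (m1 n)\<^sup>2 * d12\<^sup>2"
      using int_ident[OF N0 h1 h2 h3] by (simp add: c12_def d12_def)
    have NN2: "B.NN = real_of_int (c\<^sup>2 + d\<^sup>2)" using B.NN_def unfolding v2 by simp
    have "real_of_int ((m2 n * (c\<^sup>2 + d\<^sup>2) - n1 n * c12)\<^sup>2) = real_of_int ((m1 n)\<^sup>2 * d12\<^sup>2)"
      using I by (simp only:)
    then have "(h n)\<^sup>2 * (real_of_int (m2 n) * B.NN - real_of_int (n1 n) * c12)\<^sup>2 = (h n)\<^sup>2 * ((real_of_int (m1 n))\<^sup>2 * (real_of_int d12)\<^sup>2)"
      unfolding NN2 by simp
    then have R: "(B.Y n * B.NN - A.X n * c12)\<^sup>2 = (A.Y n * d12)\<^sup>2"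
      unfolding A.X_def A.Y_def B.Y_def by algebra
    have "(A.X n * c12)\<^sup>2 + (2 * (B.Y n * B.NN) - A.X n * c12)\<^sup>2 = 2 * (B.Y n * B.NN)\<^sup>2 + 2 * (B.Y n * B.NN - A.X n * c12)\<^sup>2"
      by algebra
    then have "(A.X n * c12)\<^sup>2 \<le> 2 * (B.Y n * B.NN)\<^sup>2 + 2 * (A.Y n * d12)\<^sup>2"
      unfolding R by (smt (verit) zero_le_power2)
    moreover have "(A.X n)\<^sup>2 \<le> (A.X n * c12)\<^sup>2"
      using mult_left_mono[OF c12r, of "(A.X n)\<^sup>2"] by (simp add: power_mult_distrib)
    ultimately show False using H by linarith
  qed
qed




lemma test_tf:
  assumes "test_fun a" shows "tf a"
proof
  have "smooth (\<lambda>(x, \<eta>). a x \<eta>)" using assms by (simp add: test_fun_def)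
  then have "Ck 0 (\<lambda>(x, \<eta>). a x \<eta>)" unfolding smooth_def by blast
  then show "continuous_on UNIV (\<lambda>(x, \<eta>). a x \<eta>)" by simp
  show "\<And>x \<eta> j. a (x + ivec j) \<eta> = a x \<eta>" using assms unfolding test_fun_def by blast
qed

lemma test_supp:
  assumes "test_fun a" obtains R where "\<And>x \<eta>. R < \<bar>\<eta>\<bar> \<Longrightarrow> a x \<eta> = 0"
  using assms unfolding test_fun_def by blast

lemma rot_neq: "rot v1 \<noteq> rot v2" if "v1 \<noteq> v2" for v1 v2
  using that by (cases v1, cases v2) (auto simp: rot_def)

lemma rot_inj: "rot x = rot y \<Longrightarrow> x = y"
  by (cases x, cases y) (auto simp: rot_def)

lemma rot_neg: "rot (- v) = - rot v"
  by (cases v) (simp add: rot_def)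

lemma dist_val_sym: "dist_val h \<epsilon> k l v a = dist_val h \<epsilon> l k v a"
proof -
  have "psi_coeff k l = psi_coeff l k" by (auto simp: psi_coeff_def fun_eq_iff)
  then show ?thesis by (simp add: dist_val_def)
qed

lemma part1:
  assumes L1: "lseq h \<epsilon> v1 n1 m1 k \<omega>1" and L2: "lseq h \<epsilon> v2 n2 m2 l \<omega>2"
    and ne: "v2 \<noteq> v1" "v2 \<noteq> - v1" and kl: "\<And>n. k n \<noteq> l n" and ta: "test_fun a"
  shows "(\<lambda>n. dist_val (h n) (\<epsilon> n) (k n) (l n) (rot v1) a)
          \<longlonglongrightarrow> (1/2) * integral (cbox (0,0) (1,1)) (\<lambda>x. a x (\<omega>1 * Llen v1))"
proof -
  interpret A: lseq h \<epsilon> v1 n1 m1 k \<omega>1 by (rule L1)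
  interpret B: lseq h \<epsilon> v2 n2 m2 l \<omega>2 by (rule L2)
  interpret T: tf a by (rule test_tf[OF ta])
  obtain R where R: "\<And>x \<eta>. R < \<bar>\<eta>\<bar> \<Longrightarrow> a x \<eta> = 0" using test_supp[OF ta] by blast
  have r0: "rot v1 \<noteq> (0,0)" using A.v0 by (cases v1) (auto simp: rot_def)
  have u: "primitive (rot v1)" "rot v1 \<noteq> rot v2" "rot v1 \<noteq> - rot v2"
    using rot_prim[OF A.v] rot_inj[of v1 v2] rot_inj[of v1 "- v2"] ne by (auto simp: rot_neg)
  have ev: "\<forall>\<^sub>F n in sequentially. (1/2) * integral (cbox (0,0) (1,1)) (\<lambda>x. a x (eta (h n) (\<epsilon> n) (rot v1) (k n)))
              = dist_val (h n) (\<epsilon> n) (k n) (l n) (rot v1) a"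
    using B.eta_big[OF u, of R] cross[OF L1 L2 ne]
  proof eventually_elim
    case (elim n)
    show ?case
      by (rule T.case_one[OF r0 kl, symmetric]) (use elim R in auto)
  qed
  have ic: "isCont (\<lambda>\<eta>. integral (cbox (0,0) (1,1)) (\<lambda>x. a x \<eta>)) (\<omega>1 * Llen v1)"
    using T.int_cont continuous_on_eq_continuous_at by blast
  have "(\<lambda>n. (1/2) * integral (cbox (0,0) (1,1)) (\<lambda>x. a x (eta (h n) (\<epsilon> n) (rot v1) (k n))))
     \<longlonglongrightarrow> (1/2) * integral (cbox (0,0) (1,1)) (\<lambda>x. a x (\<omega>1 * Llen v1))"
    by (intro tendsto_intros isCont_tendsto_compose[OF ic A.eta_rot_lim])
  from Lim_transform_eventually[OF this ev] show ?thesis .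
qed

lemma part3:
  assumes L1: "lseq h \<epsilon> v1 n1 m1 k \<omega>1" and L2: "lseq h \<epsilon> v2 n2 m2 l \<omega>2"
    and kl: "\<And>n. k n \<noteq> l n" and ta: "test_fun a"
    and v: "primitive v" "v \<noteq> rot v1" "v \<noteq> - rot v1" "v \<noteq> rot v2" "v \<noteq> - rot v2"
  shows "(\<lambda>n. dist_val (h n) (\<epsilon> n) (k n) (l n) v a) \<longlonglongrightarrow> 0"
proof -
  interpret A: lseq h \<epsilon> v1 n1 m1 k \<omega>1 by (rule L1)
  interpret B: lseq h \<epsilon> v2 n2 m2 l \<omega>2 by (rule L2)
  interpret T: tf a by (rule test_tf[OF ta])
  obtain R where R: "\<And>x \<eta>. R < \<bar>\<eta>\<bar> \<Longrightarrow> a x \<eta> = 0" using test_supp[OF ta] by blast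
  have ev: "\<forall>\<^sub>F n in sequentially. 0 = dist_val (h n) (\<epsilon> n) (k n) (l n) v a"
    using A.eta_big[OF v(1,2,3), of R] B.eta_big[OF v(1,4,5), of R]
  proof eventually_elim
    case (elim n)
    show ?case
      by (rule T.case_zero[OF _ _ kl, symmetric]) (use elim R in auto)
  qed
  from Lim_transform_eventually[OF tendsto_const ev] show ?thesis .
qed



theorem proposition3p3:
  fixes h \<epsilon> :: "nat \<Rightarrow> real"
    and v1 v2 :: "int \<times> int"
    and n1 m1 n2 m2 :: "nat \<Rightarrow> int"
    and k l :: "nat \<Rightarrow> int \<times> int"
    and \<omega>1 \<omega>2 :: real
  assumes h_pos: "\<And>n. h n > 0" and h_lim: "h \<longlonglongrightarrow> 0"
    and eps_pos: "\<And>n. \<epsilon> n > 0"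
    and scale1: "(\<lambda>n. (h n)\<^sup>2 / \<epsilon> n) \<longlonglongrightarrow> 0"
    and scale2: "(\<lambda>n. \<epsilon> n / h n) \<longlonglongrightarrow> 0"
    and v1: "primitive v1" and v2: "primitive v2"
    and L12: "v2 \<noteq> v1" "v2 \<noteq> - v1"
    and k_def: "\<And>n. k n = lcomb (n1 n) v1 (m1 n) (rot v1)"
    and l_def: "\<And>n. l n = lcomb (n2 n) v2 (m2 n) (rot v2)"
    and kl: "\<And>n. k n \<noteq> l n"
    and k_norm: "\<And>n. inorm (k n) = 1 / h n"
    and l_norm: "\<And>n. inorm (l n) = 1 / h n"
    and om1: "(\<lambda>n. 2 * pi * real_of_int (m1 n) * (h n)\<^sup>2 / \<epsilon> n) \<longlonglongrightarrow> \<omega>1"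
    and om2: "(\<lambda>n. 2 * pi * real_of_int (m2 n) * (h n)\<^sup>2 / \<epsilon> n) \<longlonglongrightarrow> \<omega>2"
  shows
    "(\<forall>a. test_fun a \<longrightarrow>
        (\<lambda>n. dist_val (h n) (\<epsilon> n) (k n) (l n) (rot v1) a)
          \<longlonglongrightarrow> (1/2) * integral (cbox (0,0) (1,1)) (\<lambda>x. a x (\<omega>1 * Llen v1)))
   \<and> (\<forall>a. test_fun a \<longrightarrow>
        (\<lambda>n. dist_val (h n) (\<epsilon> n) (k n) (l n) (rot v2) a)
          \<longlonglongrightarrow> (1/2) * integral (cbox (0,0) (1,1)) (\<lambda>x. a x (\<omega>2 * Llen v2)))
   \<and> (\<forall>v a. primitive v \<and> v \<noteq> rot v1 \<and> v \<noteq> - rot v1 \<and> v \<noteq> rot v2 \<and> v \<noteq> - rot v2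
        \<and> test_fun a \<longrightarrow>
        (\<lambda>n. dist_val (h n) (\<epsilon> n) (k n) (l n) v a) \<longlonglongrightarrow> 0)"
proof -
  have LA: "lseq h \<epsilon> v1 n1 m1 k \<omega>1"
    by (unfold_locales) (use h_pos eps_pos scale2 v1 k_def k_norm om1 in auto)
  have LB: "lseq h \<epsilon> v2 n2 m2 l \<omega>2"
    by (unfold_locales) (use h_pos eps_pos scale2 v2 l_def l_norm om2 in auto)
  have ne': "v1 \<noteq> v2" "v1 \<noteq> - v2" using L12 by auto
  have kl': "\<And>n. l n \<noteq> k n" using kl by metis
  show ?thesis
  proof (intro conjI allI impI)
    fix a assume "test_fun a"
    then show "(\<lambda>n. dist_val (h n) (\<epsilon> n) (k n) (l n) (rot v1) a)
          \<longlonglongrightarrow> (1/2) * integral (cbox (0,0) (1,1)) (\<lambda>x. a x (\<omega>1 * Llen v1))"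
      by (rule part1[OF LA LB L12 kl])
  next
    fix a assume "test_fun a"
    then show "(\<lambda>n. dist_val (h n) (\<epsilon> n) (k n) (l n) (rot v2) a)
          \<longlonglongrightarrow> (1/2) * integral (cbox (0,0) (1,1)) (\<lambda>x. a x (\<omega>2 * Llen v2))"
      unfolding dist_val_sym[of _ _ "k _"] by (rule part1[OF LB LA ne' kl'])
  next
    fix v a
    assume H: "primitive v \<and> v \<noteq> rot v1 \<and> v \<noteq> - rot v1 \<and> v \<noteq> rot v2 \<and> v \<noteq> - rot v2 \<and> test_fun a"
    then show "(\<lambda>n. dist_val (h n) (\<epsilon> n) (k n) (l n) v a) \<longlonglongrightarrow> 0"
      using part3[OF LA LB kl] by blast
  qed
qed

end
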